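(* Let $\mathcal{R}_1, \mathcal{R}_2$ be families of ranges and let $k,m$ be positive integers. Suppose that we have hitting $k$-cliques with respect to $\mathcal{R}_1$ and hitting $k$-cliques with respect to $\mathcal{R}_2$ (for these $k,m$). Then for $\mathcal{R} = \mathcal{R}_1 \cup \mathcal{R}_2$ it holds that $m_{\mathcal{R}}(k) \leq m$.
   Context: For a finite set $V \subset \mathbb{R}^2$ and a family $\mathcal{R}$ of subsets of $\mathbb{R}^2$ (ranges), $\mathcal{H}(V,\mathcal{R},m)$ is the hypergraph on $V$ whose hyperedges are the sets $V \cap R$, $R \in \mathcal{R}$, of size exactly $m$. A coloring $c\colon V \to [k]$ is polychromatic if every hyperedge contains a vertex of each of the $k$ colors. Point sets are in general position (pairwise distinct $x$-coordinates, $y$-coordinates, and values $x+y$). $m_{\mathcal{R}}(k)$ is the smallest $m$ such that for every finite $V \subset \mathbb{R}^2$ in general position, $\mathcal{H}(V,\mathcal{R},m)$ admits a polychromatic $k$-coloring ($\infty$ if none exists). For fixed $k,m,\mathcal{R}$ we say we have hitting $k$-cliques if for every finite $V \subset \mathbb{R}^2$ there exist pairwise disjoint $k$-element subsets of $V$ such that every hyperedge of $\mathcal{H}(V,\mathcal{R},m)$ fully contains at least one of these subsets. *)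

theory Defs
  imports Main "HOL-Library.Extended_Nat"
begin

type_synonym point = "real \<times> real"

definition general_position :: "point set \<Rightarrow> bool" where
  "general_position V \<longleftrightarrow>
     (\<forall>p\<in>V. \<forall>q\<in>V. p \<noteq> q \<longrightarrow>
        fst p \<noteq> fst q \<and> snd p \<noteq> snd q \<and> fst p + snd p \<noteq> fst q + snd q)"

definition hyperedges :: "point set \<Rightarrow> point set set \<Rightarrow> nat \<Rightarrow> point set set" where
  "hyperedges V \<R> m = {V \<inter> R | R. R \<in> \<R> \<and> card (V \<inter> R) = m}"

definition polychromatic :: "point set \<Rightarrow> point set set \<Rightarrow> nat \<Rightarrow> nat \<Rightarrow> (point \<Rightarrow> nat) \<Rightarrow> bool" where
  "polychromatic V \<R> m k c \<longleftrightarrow>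
     (\<forall>v\<in>V. c v \<in> {1..k}) \<and>
     (\<forall>E\<in>hyperedges V \<R> m. \<forall>i\<in>{1..k}. \<exists>v\<in>E. c v = i)"

definition admits_polychromatic :: "point set set \<Rightarrow> nat \<Rightarrow> nat \<Rightarrow> bool" where
  "admits_polychromatic \<R> k m \<longleftrightarrow>
     (\<forall>V. finite V \<and> general_position V \<longrightarrow> (\<exists>c. polychromatic V \<R> m k c))"

definition m_R :: "point set set \<Rightarrow> nat \<Rightarrow> enat" where
  "m_R \<R> k = (if \<exists>m. admits_polychromatic \<R> k m
               then enat (LEAST m. admits_polychromatic \<R> k m) else \<infinity>)"

definition hitting_cliques :: "point set set \<Rightarrow> nat \<Rightarrow> nat \<Rightarrow> bool" where
  "hitting_cliques \<R> k m \<longleftrightarrow>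
     (\<forall>V. finite V \<longrightarrow>
        (\<exists>\<S>. (\<forall>S\<in>\<S>. S \<subseteq> V \<and> card S = k) \<and>
              (\<forall>S\<in>\<S>. \<forall>T\<in>\<S>. S \<noteq> T \<longrightarrow> S \<inter> T = {}) \<and>
              (\<forall>E\<in>hyperedges V \<R> m. \<exists>S\<in>\<S>. S \<subseteq> E)))"

end

theory Submission
  imports Defs
begin

definition sameF :: "'a set set \<Rightarrow> 'a \<Rightarrow> 'a \<Rightarrow> bool" where
  "sameF F x y \<longleftrightarrow> (\<exists>S\<in>F. x \<in> S \<and> y \<in> S)"

definition proper :: "'a set set \<Rightarrow> 'a set set \<Rightarrow> nat \<Rightarrow> ('a \<Rightarrow> nat) \<Rightarrow> 'a set \<Rightarrow> bool" where
  "proper A B k c W \<longleftrightarrow> (\<forall>x\<in>W. c x \<in> {1..k}) \<and>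
     (\<forall>x\<in>W. \<forall>y\<in>W. x \<noteq> y \<and> (sameF A x y \<or> sameF B x y) \<longrightarrow> c x \<noteq> c y)"

lemma sameF_sym: "sameF F x y \<Longrightarrow> sameF F y x"
  unfolding sameF_def by blast

lemma sameF_trans:
  assumes "\<forall>S\<in>F. \<forall>T\<in>F. S \<noteq> T \<longrightarrow> S \<inter> T = {}"
    and "sameF F x y" and "sameF F y z"
  shows "sameF F x z"
  using assms unfolding sameF_def by blast

lemma missing:
  assumes disj: "\<forall>S\<in>A. \<forall>T\<in>A. S \<noteq> T \<longrightarrow> S \<inter> T = {}"
    and cardA: "\<forall>S\<in>A. card S = k" and k: "k > 0"
  shows "\<exists>\<alpha>\<in>{1..k}. \<forall>x. x \<noteq> p \<longrightarrow> sameF A p x \<longrightarrow> c x \<noteq> \<alpha>"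
proof (cases "\<exists>S\<in>A. p \<in> S")
  case False
  then show ?thesis using k by (intro bexI[of _ 1]) (auto simp: sameF_def)
next
  case True
  then obtain S where S: "S \<in> A" "p \<in> S" by blast
  have "card S = k" using cardA S by blast
  then have fin: "finite S" using k by (intro card_ge_0_finite) simp
  have "card (c ` (S - {p})) \<le> card (S - {p})" by (rule card_image_le) (use fin in auto)
  also have "\<dots> = k - 1" using S fin cardA by simp
  finally have "card (c ` (S - {p})) < card {1..k}" using k by simp
  then have "\<not> {1..k} \<subseteq> c ` (S - {p})"
  proof (intro notI)
    assume "{1..k} \<subseteq> c ` (S - {p})"
    then have "card {1..k} \<le> card (c ` (S - {p}))" by (rule card_mono[rotated]) (simp add: fin)
    then show False using \<open>card (c ` (S - {p})) < card {1..k}\<close> by simp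
  qed
  then obtain \<alpha> where a: "\<alpha> \<in> {1..k}" "\<alpha> \<notin> c ` (S - {p})" by blast
  show ?thesis
  proof (rule bexI[OF _ a(1)], intro allI impI)
    fix x assume "x \<noteq> p" "sameF A p x"
    then obtain T where "T \<in> A" "p \<in> T" "x \<in> T" by (auto simp: sameF_def)
    then have "T = S" using disj S by blast
    then show "c x \<noteq> \<alpha>" using a \<open>x \<noteq> p\<close> \<open>x \<in> T\<close> by auto
  qed
qed

lemma step:
  assumes disjA: "\<forall>S\<in>A. \<forall>T\<in>A. S \<noteq> T \<longrightarrow> S \<inter> T = {}"
    and disjB: "\<forall>S\<in>B. \<forall>T\<in>B. S \<noteq> T \<longrightarrow> S \<inter> T = {}"
    and cardA: "\<forall>S\<in>A. card S = k" and cardB: "\<forall>S\<in>B. card S = k" and k: "k > 0"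
    and pr: "proper A B k c W" and pW: "p \<notin> W"
  shows "\<exists>c'. proper A B k c' (insert p W)"
proof -
  have rng: "\<And>x. x \<in> W \<Longrightarrow> c x \<in> {1..k}" using pr unfolding proper_def by blast
  have prA: "\<And>x y. x \<in> W \<Longrightarrow> y \<in> W \<Longrightarrow> x \<noteq> y \<Longrightarrow> sameF A x y \<Longrightarrow> c x \<noteq> c y"
    using pr unfolding proper_def by blast
  have prB: "\<And>x y. x \<in> W \<Longrightarrow> y \<in> W \<Longrightarrow> x \<noteq> y \<Longrightarrow> sameF B x y \<Longrightarrow> c x \<noteq> c y"
    using pr unfolding proper_def by blast
  obtain \<alpha> where \<alpha>: "\<alpha> \<in> {1..k}" "\<And>x. x \<noteq> p \<Longrightarrow> sameF A p x \<Longrightarrow> c x \<noteq> \<alpha>"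
    using missing[OF disjA cardA k, of p c] by blast
  obtain \<beta> where \<beta>: "\<beta> \<in> {1..k}" "\<And>x. x \<noteq> p \<Longrightarrow> sameF B p x \<Longrightarrow> c x \<noteq> \<beta>"
    using missing[OF disjB cardB k, of p c] by blast
  show ?thesis
  proof (cases "\<exists>q\<in>W. sameF B p q \<and> c q = \<alpha>")
    case False
    have "proper A B k (c(p:=\<alpha>)) (insert p W)"
      unfolding proper_def
    proof (intro conjI ballI impI)
      fix x assume "x \<in> insert p W" then show "(c(p:=\<alpha>)) x \<in> {1..k}" using rng \<alpha>(1) by (cases "x = p") simp_all
    next
      fix x y assume xy: "x \<in> insert p W" "y \<in> insert p W" "x \<noteq> y \<and> (sameF A x y \<or> sameF B x y)"
      show "(c(p:=\<alpha>)) x \<noteq> (c(p:=\<alpha>)) y"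
      proof (cases "x = p")
        case True
        then have yW: "y \<in> W" "y \<noteq> p" using xy by auto
        have "sameF A p y \<or> sameF B p y" using xy True by blast
        then have "c y \<noteq> \<alpha>"
        proof
          assume "sameF A p y" then show ?thesis using \<alpha>(2)[OF yW(2)] by simp
        next
          assume "sameF B p y" then show ?thesis using False yW(1) by auto
        qed
        then show ?thesis using True yW by simp
      next
        case xp: False
        then have xW: "x \<in> W" using xy by auto
        show ?thesis
        proof (cases "y = p")
          case True
          have "sameF A p x \<or> sameF B p x" using xy(3) True by (auto simp: sameF_def)
          then have "c x \<noteq> \<alpha>"
          proof
            assume "sameF A p x" then show ?thesis using \<alpha>(2)[OF xp] by simp
          next
            assume "sameF B p x" then show ?thesis using False xW by auto
          qed
          then show ?thesis using True xp by simp
        next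
          case yp: False
          then have yW: "y \<in> W" using xy by auto
          have "c x \<noteq> c y" using xy xW yW prA prB by blast
          then show ?thesis using xp yp by simp
        qed
      qed
    qed
    then show ?thesis by blast
  next
    case True
    then obtain q where q: "q \<in> W" "sameF B p q" "c q = \<alpha>" by blast
    have qp: "q \<noteq> p" using q pW by auto
    have ab: "\<alpha> \<noteq> \<beta>" using \<beta>(2)[OF qp q(2)] q(3) by auto
    define R where "R = {(x,y). x \<in> W \<and> y \<in> W \<and> x \<noteq> y \<and>
        ((c x = \<alpha> \<and> c y = \<beta> \<and> sameF A x y) \<or> (c x = \<beta> \<and> c y = \<alpha> \<and> sameF B x y))}"
    define K where "K = {y. (q,y) \<in> R\<^sup>*}"
    define sw where "sw z = (if z = \<alpha> then \<beta> else if z = \<beta> then \<alpha> else z)" for z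
    define c' where "c' = (\<lambda>x. if x \<in> K then sw (c x) else c x)(p := \<alpha>)"
    have qK: "q \<in> K" unfolding K_def by simp
    have KW: "x \<in> W \<and> (c x = \<alpha> \<or> c x = \<beta>)" if "x \<in> K" for x
    proof -
      have "(q,x) \<in> R\<^sup>*" using that K_def by simp
      then show ?thesis
        by (induction rule: rtrancl_induct) (use q in \<open>auto simp: R_def\<close>)
    qed
    have pred: "\<exists>z\<in>K. (z,x) \<in> R" if "x \<in> K" "x \<noteq> q" for x
    proof -
      have "(q,x) \<in> R\<^sup>*" using that K_def by simp
      then show ?thesis using that(2)
        by (cases rule: rtranclE) (auto simp: K_def)
    qed
    have fwd: "y \<in> K" if "x \<in> K" "(x,y) \<in> R" for x y
      using that unfolding K_def by (auto intro: rtrancl_into_rtrancl)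
    have pK: "p \<notin> K" using KW pW by blast
    have c'W: "c' x = (if x \<in> K then sw (c x) else c x)" if "x \<in> W" for x
      using that pW c'_def by auto
    have c'p: "c' p = \<alpha>" using c'_def by simp
    have swinj: "sw a = sw b \<Longrightarrow> a = b" for a b unfolding sw_def by (auto split: if_splits)
    have swrng: "z \<in> {1..k} \<Longrightarrow> sw z \<in> {1..k}" for z using \<alpha> \<beta> unfolding sw_def by auto
    have A1: "c' x \<noteq> c' y" if "x \<in> W" "y \<in> W" "x \<noteq> y" "sameF A x y" "x \<in> K" "y \<notin> K" for x y
    proof -
      have "c x = \<alpha> \<or> c x = \<beta>" using KW that by blast
      then show ?thesis
      proof
        assume cx: "c x = \<alpha>"
        have "c y \<noteq> \<beta>"
        proof
          assume "c y = \<beta>"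
          then have "(x,y) \<in> R" using that cx unfolding R_def by auto
          then show False using fwd that by blast
        qed
        then show ?thesis using c'W that cx unfolding sw_def by auto
      next
        assume cx: "c x = \<beta>"
        then have "x \<noteq> q" using q ab by auto
        then obtain z where z: "z \<in> K" "(z,x) \<in> R" using pred \<open>x \<in> K\<close> by blast
        then have zz: "c z = \<alpha>" "sameF A z x" "z \<in> W" using cx ab unfolding R_def by auto
        have "z \<noteq> y" using z that by auto
        moreover have "sameF A z y" using sameF_trans[OF disjA zz(2) that(4)] .
        ultimately have "c z \<noteq> c y" using prA zz that by blast
        then show ?thesis using c'W that cx zz unfolding sw_def by auto
      qed
    qed
    have B1: "c' x \<noteq> c' y" if "x \<in> W" "y \<in> W" "x \<noteq> y" "sameF B x y" "x \<in> K" "y \<notin> K" for x y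
    proof -
      have "c x = \<alpha> \<or> c x = \<beta>" using KW that by blast
      then show ?thesis
      proof
        assume cx: "c x = \<beta>"
        have "c y \<noteq> \<alpha>"
        proof
          assume "c y = \<alpha>"
          then have "(x,y) \<in> R" using that cx unfolding R_def by auto
          then show False using fwd that by blast
        qed
        then show ?thesis using c'W that cx ab unfolding sw_def by auto
      next
        assume cx: "c x = \<alpha>"
        have "c y \<noteq> \<beta>"
        proof (cases "x = q")
          case True
          have "sameF B p y" using sameF_trans[OF disjB q(2)] True that(4) by simp
          moreover have "y \<noteq> p" using that pW by auto
          ultimately show ?thesis using \<beta>(2) by blast
        next
          case False
          then obtain z where z: "z \<in> K" "(z,x) \<in> R" using pred \<open>x \<in> K\<close> by blast
          then have zz: "c z = \<beta>" "sameF B z x" "z \<in> W" using cx ab unfolding R_def by auto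
          have "z \<noteq> y" using z that by auto
          moreover have "sameF B z y" using sameF_trans[OF disjB zz(2) that(4)] .
          ultimately have "c z \<noteq> c y" using prB zz that by blast
          then show ?thesis using zz by simp
        qed
        then show ?thesis using c'W that cx ab unfolding sw_def by auto
      qed
    qed
    have PA: "c' y \<noteq> \<alpha>" if "y \<in> W" "sameF A p y" for y
    proof (cases "y \<in> K")
      case True
      have yp: "y \<noteq> p" using that pW by auto
      have "c y \<noteq> \<alpha>" using \<alpha>(2) yp that by blast
      then have cy: "c y = \<beta>" using KW True by blast
      then have "y \<noteq> q" using q ab by auto
      then obtain z where z: "z \<in> K" "(z,y) \<in> R" using pred True by blast
      then have zz: "c z = \<alpha>" "sameF A z y" "z \<in> W" using cy ab unfolding R_def by auto
      have "sameF A p z" using sameF_trans[OF disjA that(2) sameF_sym[OF zz(2)]] .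
      moreover have "z \<noteq> p" using zz pW by auto
      ultimately show ?thesis using \<alpha>(2) zz by blast
    next
      case False
      have yp: "y \<noteq> p" using that pW by auto
      then show ?thesis using \<alpha>(2) that False c'W by auto
    qed
    have PB: "c' y \<noteq> \<alpha>" if "y \<in> W" "sameF B p y" for y
    proof (cases "y \<in> K")
      case True
      have yp: "y \<noteq> p" using that pW by auto
      have "c y \<noteq> \<beta>" using \<beta>(2) yp that by blast
      then have cy: "c y = \<alpha>" using KW True by blast
      then show ?thesis using c'W that True ab unfolding sw_def by auto
    next
      case False
      then have "y \<noteq> q" using qK by auto
      moreover have "sameF B q y" using sameF_trans[OF disjB sameF_sym[OF q(2)] that(2)] .
      ultimately have "c q \<noteq> c y" using prB q that by blast
      then show ?thesis using c'W that False q by auto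
    qed
    have "proper A B k c' (insert p W)"
      unfolding proper_def
    proof (intro conjI ballI impI)
      fix x assume "x \<in> insert p W" then show "c' x \<in> {1..k}"
        using rng \<alpha> c'p c'W swrng by (cases "x = p") auto
    next
      fix x y assume xy: "x \<in> insert p W" "y \<in> insert p W" "x \<noteq> y \<and> (sameF A x y \<or> sameF B x y)"
      have neq: "c x \<noteq> c y" if "x \<in> W" "y \<in> W"
        using xy that prA prB by blast
      show "c' x \<noteq> c' y"
      proof (cases "x = p")
        case True
        then have "y \<in> W" using xy by auto
        have "sameF A p y \<or> sameF B p y" using xy True by blast
        then have "c' y \<noteq> \<alpha>" using PA PB \<open>y \<in> W\<close> by blast
        then show ?thesis using True c'p by simp
      next
        case xp: False
        then have xW: "x \<in> W" using xy by auto
        show ?thesis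
        proof (cases "y = p")
          case True
          have "sameF A p x \<or> sameF B p x" using xy(3) True by (auto simp: sameF_def)
          then have "c' x \<noteq> \<alpha>" using PA PB xW by blast
          then show ?thesis using True c'p by simp
        next
          case False
          then have yW: "y \<in> W" using xy by auto
          have cxy: "c x \<noteq> c y" using neq xW yW .
          consider "x \<in> K" "y \<in> K" | "x \<notin> K" "y \<notin> K" | "x \<in> K" "y \<notin> K" | "x \<notin> K" "y \<in> K"
            by blast
          then show ?thesis
          proof cases
            case 1
            have "sw (c x) \<noteq> sw (c y)" using cxy swinj by blast
            then show ?thesis using 1 c'W xW yW by simp
          next
            case 2 then show ?thesis using cxy c'W xW yW by simp
          next
            case 3 then show ?thesis using xW yW xy A1 B1 by blast
          next
            case 4
            have "sameF A y x \<or> sameF B y x" using xy(3) by (auto simp: sameF_def)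
            then have "c' y \<noteq> c' x" using 4 xW yW xy A1 B1 by blast
            then show ?thesis by simp
          qed
        qed
      qed
    qed
    then show ?thesis by blast
  qed
qed

lemma exists_proper:
  assumes disjA: "\<forall>S\<in>A. \<forall>T\<in>A. S \<noteq> T \<longrightarrow> S \<inter> T = {}"
    and disjB: "\<forall>S\<in>B. \<forall>T\<in>B. S \<noteq> T \<longrightarrow> S \<inter> T = {}"
    and cardA: "\<forall>S\<in>A. card S = k" and cardB: "\<forall>S\<in>B. card S = k" and k: "k > 0"
    and "finite W"
  shows "\<exists>c. proper A B k c W"
  using \<open>finite W\<close>
proof (induction W rule: finite_induct)
  case empty
  then show ?case unfolding proper_def by auto
next
  case (insert p W)
  then obtain c where "proper A B k c W" by blast
  then show ?case using step[OF disjA disjB cardA cardB k _ insert(2)] by blast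
qed

lemma rainbow:
  assumes "proper A B k c V" "S \<subseteq> V" "card S = k" "k > 0" "S \<in> A \<or> S \<in> B"
  shows "\<forall>i\<in>{1..k}. \<exists>v\<in>S. c v = i"
proof -
  have fin: "finite S" using assms(3,4) by (intro card_ge_0_finite) simp
  have inj: "inj_on c S"
  proof (rule inj_onI, rule ccontr)
    fix x y assume "x \<in> S" "y \<in> S" "c x = c y" "x \<noteq> y"
    moreover have "sameF A x y \<or> sameF B x y" using assms(5) \<open>x \<in> S\<close> \<open>y \<in> S\<close>
      unfolding sameF_def by blast
    ultimately show False using assms(1,2) unfolding proper_def by blast
  qed
  have sub: "c ` S \<subseteq> {1..k}" using assms(1,2) unfolding proper_def by blast
  have "card (c ` S) = card {1..k}" using card_image[OF inj] assms(3) by simp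
  then have cs: "c ` S = {1..k}" using sub by (simp add: card_subset_eq)
  show ?thesis
  proof
    fix i assume "i \<in> {1..k}"
    then have "i \<in> c ` S" using cs by simp
    then show "\<exists>v\<in>S. c v = i" by force
  qed
qed

theorem theorem2:
  fixes \<R>1 \<R>2 :: "point set set" and k m :: nat
  assumes "k > 0" and "m > 0"
    and "hitting_cliques \<R>1 k m"
    and "hitting_cliques \<R>2 k m"
  shows "m_R (\<R>1 \<union> \<R>2) k \<le> enat m"
proof -
  have adm: "admits_polychromatic (\<R>1 \<union> \<R>2) k m"
    unfolding admits_polychromatic_def
  proof (intro allI impI)
    fix V :: "point set" assume V: "finite V \<and> general_position V"
    have exA: "\<exists>\<S>. (\<forall>S\<in>\<S>. S \<subseteq> V \<and> card S = k) \<and> (\<forall>S\<in>\<S>. \<forall>T\<in>\<S>. S \<noteq> T \<longrightarrow> S \<inter> T = {}) \<and> (\<forall>E\<in>hyperedges V \<R>1 m. \<exists>S\<in>\<S>. S \<subseteq> E)"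
      using mp[OF spec[OF assms(3)[unfolded hitting_cliques_def], of V] conjunct1[OF V]] .
    obtain A where A0: "(\<forall>S\<in>A. S \<subseteq> V \<and> card S = k) \<and> (\<forall>S\<in>A. \<forall>T\<in>A. S \<noteq> T \<longrightarrow> S \<inter> T = {}) \<and> (\<forall>E\<in>hyperedges V \<R>1 m. \<exists>S\<in>A. S \<subseteq> E)"
      using exA by (rule exE)
    note A = conjunct1[OF A0] conjunct1[OF conjunct2[OF A0]] conjunct2[OF conjunct2[OF A0]]
    have exB: "\<exists>\<S>. (\<forall>S\<in>\<S>. S \<subseteq> V \<and> card S = k) \<and> (\<forall>S\<in>\<S>. \<forall>T\<in>\<S>. S \<noteq> T \<longrightarrow> S \<inter> T = {}) \<and> (\<forall>E\<in>hyperedges V \<R>2 m. \<exists>S\<in>\<S>. S \<subseteq> E)"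
      using mp[OF spec[OF assms(4)[unfolded hitting_cliques_def], of V] conjunct1[OF V]] .
    obtain B where B0: "(\<forall>S\<in>B. S \<subseteq> V \<and> card S = k) \<and> (\<forall>S\<in>B. \<forall>T\<in>B. S \<noteq> T \<longrightarrow> S \<inter> T = {}) \<and> (\<forall>E\<in>hyperedges V \<R>2 m. \<exists>S\<in>B. S \<subseteq> E)"
      using exB by (rule exE)
    note B = conjunct1[OF B0] conjunct1[OF conjunct2[OF B0]] conjunct2[OF conjunct2[OF B0]]
    have cA: "\<forall>S\<in>A. card S = k" using A(1) by simp
    have cB: "\<forall>S\<in>B. card S = k" using B(1) by simp
    have "\<exists>c. proper A B k c V" using exists_proper[OF A(2) B(2) cA cB assms(1) conjunct1[OF V]] .
    then obtain c where c: "proper A B k c V" by (rule exE)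
    have "polychromatic V (\<R>1 \<union> \<R>2) m k c"
      unfolding polychromatic_def
    proof (intro conjI ballI)
      fix v assume "v \<in> V" then show "c v \<in> {1..k}" using c unfolding proper_def by blast
    next
      fix E i assume E: "E \<in> hyperedges V (\<R>1 \<union> \<R>2) m" and i: "i \<in> {1..k}"
      have "\<exists>R. E = V \<inter> R \<and> R \<in> \<R>1 \<union> \<R>2 \<and> card (V \<inter> R) = m"
        using E unfolding hyperedges_def mem_Collect_eq .
      then obtain R where R: "E = V \<inter> R" "R \<in> \<R>1 \<union> \<R>2" "card (V \<inter> R) = m"
        by (elim exE conjE)
      have "\<exists>S. S \<subseteq> E \<and> (S \<in> A \<or> S \<in> B)"
      proof (cases "R \<in> \<R>1")
        case True
        have "E \<in> hyperedges V \<R>1 m" unfolding hyperedges_def mem_Collect_eq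
          by (rule exI[of _ R]) (use R True in simp)
        then have "\<exists>S\<in>A. S \<subseteq> E" by (rule bspec[OF A(3)])
        then obtain S where "S \<in> A" "S \<subseteq> E" by (rule bexE)
        then show ?thesis by (intro exI[of _ S]) simp
      next
        case False
        then have "R \<in> \<R>2" using R(2) by simp
        then have "E \<in> hyperedges V \<R>2 m" unfolding hyperedges_def mem_Collect_eq
          by (intro exI[of _ R]) (use R in simp)
        then have "\<exists>S\<in>B. S \<subseteq> E" by (rule bspec[OF B(3)])
        then obtain S where "S \<in> B" "S \<subseteq> E" by (rule bexE)
        then show ?thesis by (intro exI[of _ S]) simp
      qed
      then obtain S where S: "S \<subseteq> E" "S \<in> A \<or> S \<in> B" by (elim exE conjE)
      then have "S \<subseteq> V" "card S = k" using A(1) B(1) by auto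
      then have "\<forall>i\<in>{1..k}. \<exists>v\<in>S. c v = i" using rainbow[OF c _ _ assms(1) S(2)] by blast
      then show "\<exists>v\<in>E. c v = i" using i S(1) by blast
    qed
    then show "\<exists>c. polychromatic V (\<R>1 \<union> \<R>2) m k c" by blast
  qed
  then have "(LEAST m. admits_polychromatic (\<R>1 \<union> \<R>2) k m) \<le> m" by (rule Least_le)
  moreover have "\<exists>m. admits_polychromatic (\<R>1 \<union> \<R>2) k m" using adm by blast
  ultimately show ?thesis unfolding m_R_def by simp
qed

end
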